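(* Let $d\ge 2$ and $k$ be positive integers. There exists a unique subset $\mathcal{X}$ of $\mathbb{P}^d_\circ$ such that $|\mathcal{X}|=\delta_z(d,k)$ and $\kappa(\mathcal{X})\le k$ if and only if $k=\kappa(B(d,p)\cap\mathbb{P}^d_\circ)$ for some positive integer $p$.
   Context: A point of $\mathbb{Z}^d$ is primitive if its coordinates are relatively prime; $\mathbb{P}^d_\circ$ denotes the set of primitive points of $\mathbb{Z}^d$ whose first non-zero coordinate is positive. $B(d,p)=\{x\in\mathbb{R}^d:\|x\|_1\le p\}$. For a finite $\mathcal{X}\subset\mathbb{R}^d$, $\kappa(\mathcal{X})=\max_{1\le i\le d}\sum_{x\in\mathcal{X}}|x_i|$, and $\delta_z(d,k)=\max\{|\mathcal{X}|:\mathcal{X}\subset\mathbb{P}^d_\circ,\ \kappa(\mathcal{X})\le k\}$. *)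

theory Defs
  imports Main
begin

text \<open>Points of Z^d are represented as integer lists of length d.\<close>

definition primitive :: "int list \<Rightarrow> bool" where
  "primitive x \<longleftrightarrow> Gcd (set x) = 1"

definition first_nonzero_pos :: "int list \<Rightarrow> bool" where
  "first_nonzero_pos x \<longleftrightarrow> (\<exists>i<length x. (\<forall>j<i. x ! j = 0) \<and> x ! i > 0)"

definition Pcirc :: "nat \<Rightarrow> int list set" where
  "Pcirc d = {x. length x = d \<and> primitive x \<and> first_nonzero_pos x}"

definition Bint :: "nat \<Rightarrow> int \<Rightarrow> int list set" where
  "Bint d p = {x. length x = d \<and> (\<Sum>i<d. \<bar>x ! i\<bar>) \<le> p}"

definition kappa :: "nat \<Rightarrow> int list set \<Rightarrow> int" where
  "kappa d X = Max ((\<lambda>i. \<Sum>x\<in>X. \<bar>x ! i\<bar>) ` {..<d})"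

definition delta_z :: "nat \<Rightarrow> int \<Rightarrow> nat" where
  "delta_z d k = Max {card X | X. finite X \<and> X \<subseteq> Pcirc d \<and> kappa d X \<le> k}"

end

theory Submission
  imports Defs
begin

definition nrm :: "nat \<Rightarrow> int list \<Rightarrow> int" where "nrm d x = (\<Sum>i<d. \<bar>x!i\<bar>)"
definition cs :: "int list set \<Rightarrow> nat \<Rightarrow> int" where "cs X i = (\<Sum>x\<in>X. \<bar>x!i\<bar>)"
definition tr :: "nat \<Rightarrow> nat \<Rightarrow> nat \<Rightarrow> nat" where
  "tr i j l = (if l = i then j else if l = j then i else l)"
definition sw :: "nat \<Rightarrow> nat \<Rightarrow> int list \<Rightarrow> int list" where
  "sw i j x = map (\<lambda>l. x ! tr i j l) [0..<length x]"
definition nz :: "int list \<Rightarrow> int list" where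
  "nz z = (if first_nonzero_pos z then z else map uminus z)"
definition TT :: "nat \<Rightarrow> nat \<Rightarrow> int list \<Rightarrow> int list" where "TT i j x = nz (sw i j x)"

lemma tr_lt: "i < n \<Longrightarrow> j < n \<Longrightarrow> l < n \<Longrightarrow> tr i j l < n" by (simp add: tr_def)
lemma tr_tr[simp]: "tr i j (tr i j l) = l" by (simp add: tr_def)
lemma bij_tr: "i < n \<Longrightarrow> j < n \<Longrightarrow> bij_betw (tr i j) {..<n} {..<n}"
  by (rule bij_betw_byWitness[where f'="tr i j"]) (auto simp: tr_lt)

lemma sw_len[simp]: "length (sw i j x) = length x" by (simp add: sw_def)
lemma sw_nth[simp]: "l < length x \<Longrightarrow> sw i j x ! l = x ! tr i j l" by (simp add: sw_def)
lemma sw_sw: "i < length x \<Longrightarrow> j < length x \<Longrightarrow> sw i j (sw i j x) = x"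
  by (rule nth_equalityI) (auto simp: tr_lt)
lemma sw_uminus: "i < length x \<Longrightarrow> j < length x \<Longrightarrow> sw i j (map uminus x) = map uminus (sw i j x)"
  by (rule nth_equalityI) (auto simp: tr_lt)

lemma first_nz: assumes "\<exists>i<length x. x!i \<noteq> (0::int)"
  shows "\<exists>i<length x. (\<forall>j<i. x!j = 0) \<and> x!i \<noteq> 0"
proof -
  obtain i where i: "i < length x" "x!i \<noteq> 0" using assms by auto
  define m where "m = (LEAST i. x!i \<noteq> 0)"
  have "x!m \<noteq> 0" unfolding m_def by (rule LeastI[of _ i]) (rule i(2))
  moreover have "m \<le> i" unfolding m_def by (rule Least_le) (rule i(2))
  moreover have "\<forall>j<m. x!j = 0"
  proof (intro allI impI)
    fix j assume "j < m"
    then have "\<not> (x!j \<noteq> 0)" unfolding m_def by (rule not_less_Least)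
    then show "x!j = 0" by simp
  qed
  ultimately show ?thesis using i by (intro exI[of _ m]) auto
qed

lemma fnp_or: "\<exists>i<length x. x!i \<noteq> (0::int) \<Longrightarrow> first_nonzero_pos x \<or> first_nonzero_pos (map uminus x)"
proof -
  assume "\<exists>i<length x. x!i \<noteq> (0::int)"
  then obtain i where i: "i < length x" "\<forall>j<i. x!j = 0" "x!i \<noteq> 0" using first_nz by blast
  show ?thesis
  proof (cases "x!i > 0")
    case True
    then have "first_nonzero_pos x" unfolding first_nonzero_pos_def using i by blast
    then show ?thesis ..
  next
    case False
    then have "map uminus x ! i > 0" "\<forall>j<i. map uminus x ! j = 0" using i by auto
    then have "first_nonzero_pos (map uminus x)" unfolding first_nonzero_pos_def using i(1)
      by (intro exI[of _ i]) auto
    then show ?thesis ..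
  qed
qed

lemma fnp_not_both: "first_nonzero_pos x \<Longrightarrow> \<not> first_nonzero_pos (map uminus x)"
proof
  assume "first_nonzero_pos x" "first_nonzero_pos (map uminus x)"
  then obtain i i' where i: "i < length x" "\<forall>j<i. x!j = 0" "x!i > 0"
    and i': "i' < length x" "\<forall>j<i'. map uminus x ! j = 0" "map uminus x ! i' > 0"
    unfolding first_nonzero_pos_def by auto
  have "\<not> i < i'" using i i' by auto
  moreover have "\<not> i' < i" using i i' by auto
  moreover have "\<not> i = i'" using i i' by auto
  ultimately show False by linarith
qed

lemma fnp_nonneg: "\<forall>l<length x. 0 \<le> x!l \<Longrightarrow> \<exists>i<length x. x!i \<noteq> (0::int) \<Longrightarrow> first_nonzero_pos x"
  using first_nz[of x] unfolding first_nonzero_pos_def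
  by (metis order_le_neq_trans)

lemma prim_cong: "length x = length y \<Longrightarrow> (\<forall>l<length x. \<bar>x!l\<bar> = \<bar>y!l\<bar>) \<Longrightarrow> primitive x = primitive y"
proof -
  assume a: "length x = length y" "\<forall>l<length x. \<bar>x!l\<bar> = \<bar>y!l\<bar>"
  have *: "(\<forall>e\<in>set x. c dvd e) = (\<forall>e\<in>set y. c dvd e)" for c :: int
    using a by (auto simp: in_set_conv_nth) (metis dvd_abs_iff nth_mem)+
  have "Gcd (set x) dvd Gcd (set y)" using *[of "Gcd (set x)"] by (simp add: Gcd_dvd Gcd_greatest)
  moreover have "Gcd (set y) dvd Gcd (set x)" using *[of "Gcd (set y)"] by (simp add: Gcd_dvd Gcd_greatest)
  ultimately have "Gcd (set x) = Gcd (set y)" by (simp add: zdvd_antisym_nonneg)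
  then show ?thesis by (simp add: primitive_def)
qed

lemma set_sw: "i < length x \<Longrightarrow> j < length x \<Longrightarrow> set (sw i j x) = set x"
proof
  assume a: "i < length x" "j < length x"
  show "set (sw i j x) \<subseteq> set x" using a by (auto simp: in_set_conv_nth) (metis tr_lt)
  show "set x \<subseteq> set (sw i j x)"
  proof
    fix e assume "e \<in> set x" then obtain l where "l < length x" "x!l = e" by (auto simp: in_set_conv_nth)
    then have "sw i j x ! tr i j l = e" "tr i j l < length x" using a by (auto simp: tr_lt)
    then show "e \<in> set (sw i j x)" by (metis nth_mem sw_len)
  qed
qed

lemma prim_one: "1 \<in> set x \<Longrightarrow> primitive x"
  unfolding primitive_def by (metis Gcd_dvd Gcd_int_greater_eq_0 zdvd_antisym_nonneg one_dvd zero_le_one)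

lemma Pcirc_nz: "x \<in> Pcirc d \<Longrightarrow> \<exists>i<d. x!i > 0"
  unfolding Pcirc_def first_nonzero_pos_def by auto

lemma nrm_ge1: "x \<in> Pcirc d \<Longrightarrow> nrm d x \<ge> 1"
proof -
  assume "x \<in> Pcirc d"
  then obtain i where "i<d" "x!i > 0" using Pcirc_nz by blast
  then have "\<bar>x!i\<bar> \<le> nrm d x" unfolding nrm_def by (intro member_le_sum) auto
  then show ?thesis using \<open>x!i>0\<close> by linarith
qed

lemma nz_Pcirc: "length z = d \<Longrightarrow> primitive z \<Longrightarrow> \<exists>i<d. z!i \<noteq> 0 \<Longrightarrow> nz z \<in> Pcirc d"
proof -
  assume a: "length z = d" "primitive z" "\<exists>i<d. z!i \<noteq> 0"
  have "primitive (map uminus z)" using prim_cong[of "map uminus z" z] a by simp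
  then show ?thesis using a fnp_or[of z] unfolding nz_def Pcirc_def by auto
qed

lemma nz_abs: "l < length z \<Longrightarrow> \<bar>nz z ! l\<bar> = \<bar>z!l\<bar>" by (simp add: nz_def)
lemma nz_len[simp]: "length (nz z) = length z" by (simp add: nz_def)

lemma TT_Pcirc: "x \<in> Pcirc d \<Longrightarrow> i < d \<Longrightarrow> j < d \<Longrightarrow> TT i j x \<in> Pcirc d"
proof -
  assume a: "x \<in> Pcirc d" "i < d" "j < d"
  have "primitive (sw i j x)" using a set_sw[of i x j] by (simp add: Pcirc_def primitive_def)
  moreover obtain l where "l<d" "x!l > 0" using Pcirc_nz a by blast
  then have "sw i j x ! tr i j l \<noteq> 0" using a by (simp add: Pcirc_def tr_lt)
  ultimately show ?thesis unfolding TT_def using a \<open>l<d\<close>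
    by (intro nz_Pcirc) (auto simp: Pcirc_def intro!: exI[of _ "tr i j l"] tr_lt)
qed

lemma TT_abs: "x \<in> Pcirc d \<Longrightarrow> i < d \<Longrightarrow> j < d \<Longrightarrow> l < d \<Longrightarrow> \<bar>TT i j x ! l\<bar> = \<bar>x ! tr i j l\<bar>"
  unfolding TT_def Pcirc_def by (subst nz_abs) auto

lemma TT_TT: "x \<in> Pcirc d \<Longrightarrow> i < d \<Longrightarrow> j < d \<Longrightarrow> TT i j (TT i j x) = x"
proof -
  assume a: "x \<in> Pcirc d" "i < d" "j < d"
  then have f: "first_nonzero_pos x" "length x = d" by (auto simp: Pcirc_def)
  show ?thesis
  proof (cases "first_nonzero_pos (sw i j x)")
    case True
    then show ?thesis using a f by (simp add: TT_def nz_def sw_sw)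
  next
    case False
    then have "TT i j x = map uminus (sw i j x)" by (simp add: TT_def nz_def)
    then have "sw i j (TT i j x) = map uminus x" using a f by (simp add: sw_uminus sw_sw Pcirc_def)
    then show ?thesis using fnp_not_both[OF f(1)] by (simp add: TT_def nz_def comp_def)
  qed
qed

lemma nrm_TT: "x \<in> Pcirc d \<Longrightarrow> i < d \<Longrightarrow> j < d \<Longrightarrow> nrm d (TT i j x) = nrm d x"
proof -
  assume a: "x \<in> Pcirc d" "i < d" "j < d"
  have "nrm d (TT i j x) = (\<Sum>l<d. \<bar>x ! tr i j l\<bar>)" unfolding nrm_def using a
    by (intro sum.cong) (auto simp: TT_abs)
  also have "\<dots> = nrm d x" unfolding nrm_def
    using sum.reindex_bij_betw[OF bij_tr[OF a(2,3)], of "\<lambda>l. \<bar>x!l\<bar>"] by simp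
  finally show ?thesis .
qed

lemma cs_TT: "X \<subseteq> Pcirc d \<Longrightarrow> i < d \<Longrightarrow> j < d \<Longrightarrow> l < d \<Longrightarrow> cs (TT i j ` X) l = cs X (tr i j l)"
proof -
  assume a: "X \<subseteq> Pcirc d" "i < d" "j < d" "l < d"
  have inj: "inj_on (TT i j) X" using a by (intro inj_on_inverseI[where g="TT i j"]) (auto intro: TT_TT)
  have "cs (TT i j ` X) l = (\<Sum>x\<in>X. \<bar>TT i j x ! l\<bar>)" unfolding cs_def using sum.reindex[OF inj] by simp
  also have "\<dots> = cs X (tr i j l)" unfolding cs_def using a by (intro sum.cong) (auto simp: TT_abs)
  finally show ?thesis .
qed

lemma kappa_le: "d > 0 \<Longrightarrow> kappa d X \<le> k \<longleftrightarrow> (\<forall>i<d. cs X i \<le> k)"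
  unfolding kappa_def cs_def by (subst Max_le_iff) auto

lemma cs_le_kappa: "i < d \<Longrightarrow> cs X i \<le> kappa d X"
  unfolding kappa_def cs_def by (intro Max_ge) auto


lemma card_bound:
  assumes "finite X" "X \<subseteq> Pcirc d" "kappa d X \<le> k" "d > 0"
  shows "int (card X) \<le> int d * k"
proof -
  have "int (card X) = (\<Sum>x\<in>X. 1::int)" by simp
  also have "\<dots> \<le> (\<Sum>x\<in>X. nrm d x)" using assms nrm_ge1 by (intro sum_mono) auto
  also have "\<dots> = (\<Sum>i<d. cs X i)" unfolding nrm_def cs_def by (rule sum.swap)
  also have "\<dots> \<le> (\<Sum>i<d. k)" using assms kappa_le by (intro sum_mono) auto
  finally show ?thesis by simp
qed

lemma kappa_empty: "d > 0 \<Longrightarrow> kappa d {} \<le> 0"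
  by (simp add: kappa_le cs_def)

lemma delta_props:
  assumes "d > 0" "k \<ge> 0"
  shows "\<And>Y. finite Y \<Longrightarrow> Y \<subseteq> Pcirc d \<Longrightarrow> kappa d Y \<le> k \<Longrightarrow> card Y \<le> delta_z d k"
    and "\<exists>Y. finite Y \<and> Y \<subseteq> Pcirc d \<and> kappa d Y \<le> k \<and> card Y = delta_z d k"
proof -
  let ?S = "{card X | X. finite X \<and> X \<subseteq> Pcirc d \<and> kappa d X \<le> k}"
  have sub: "?S \<subseteq> {..nat (int d * k)}" using card_bound assms by fastforce
  then have fin: "finite ?S" using finite_subset by blast
  have "card {} \<in> ?S" using kappa_empty[OF assms(1)] assms(2)
    by (intro CollectI exI[of _ "{}"]) auto
  then have ne: "?S \<noteq> {}" by blast
  show "card Y \<le> delta_z d k" if "finite Y" "Y \<subseteq> Pcirc d" "kappa d Y \<le> k" for Y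
    unfolding delta_z_def using that fin by (intro Max_ge) auto
  have "delta_z d k \<in> ?S" unfolding delta_z_def using fin ne by (rule Max_in)
  then show "\<exists>Y. finite Y \<and> Y \<subseteq> Pcirc d \<and> kappa d Y \<le> k \<and> card Y = delta_z d k" by auto
qed

definition nn :: "nat \<Rightarrow> int list \<Rightarrow> bool" where
  "nn d x \<longleftrightarrow> length x = d \<and> (\<forall>l<d. 0 \<le> x!l)"

lemma nn_Pcirc: "nn d x \<Longrightarrow> primitive x \<Longrightarrow> \<exists>l<d. x!l \<noteq> 0 \<Longrightarrow> x \<in> Pcirc d"
  unfolding Pcirc_def nn_def using fnp_nonneg[of x] by auto

lemma nn_one_Pcirc: "nn d x \<Longrightarrow> 0 < d \<Longrightarrow> x!0 = 1 \<Longrightarrow> x \<in> Pcirc d"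
proof -
  assume a: "nn d x" "0 < d" "x!0 = 1"
  then have "1 \<in> set x" by (metis nn_def nth_mem)
  then show ?thesis using a by (intro nn_Pcirc prim_one) auto
qed

lemma TT_nn: "nn d x \<Longrightarrow> x \<in> Pcirc d \<Longrightarrow> i < d \<Longrightarrow> j < d \<Longrightarrow> TT i j x = sw i j x"
proof -
  assume a: "nn d x" "x \<in> Pcirc d" "i < d" "j < d"
  obtain l where l: "l<d" "x!l > 0" using Pcirc_nz a by blast
  have "first_nonzero_pos (sw i j x)"
    using a l by (intro fnp_nonneg) (auto simp: nn_def tr_lt intro!: exI[of _ "tr i j l"])
  then show ?thesis by (simp add: TT_def nz_def)
qed

lemma nn_sw: "nn d x \<Longrightarrow> i < d \<Longrightarrow> j < d \<Longrightarrow> nn d (sw i j x)"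
  by (auto simp: nn_def tr_lt)

locale U =
  fixes d :: nat and k :: int and X :: "int list set"
  assumes d2: "d \<ge> 2" and kpos: "k > 0" and fX: "finite X" and XP: "X \<subseteq> Pcirc d"
    and cX: "card X = delta_z d k" and kX: "kappa d X \<le> k"
    and uq: "\<And>Y. finite Y \<Longrightarrow> Y \<subseteq> Pcirc d \<Longrightarrow> card Y = delta_z d k \<Longrightarrow> kappa d Y \<le> k \<Longrightarrow> Y = X"
begin

lemma d0: "d > 0" using d2 by simp

lemma dle: "finite Y \<Longrightarrow> Y \<subseteq> Pcirc d \<Longrightarrow> kappa d Y \<le> k \<Longrightarrow> card Y \<le> delta_z d k"
  using delta_props(1)[OF d0] kpos by auto

lemma exch:
  assumes A: "A \<subseteq> X" and B: "finite B" "B \<subseteq> Pcirc d" "B \<inter> X = {}" "B \<noteq> {}" "card A \<le> card B"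
    and s: "\<forall>l<d. cs X l - cs A l + cs B l \<le> k"
  shows False
proof -
  define Y where "Y = (X - A) \<union> B"
  have fA: "finite A" using A fX finite_subset by blast
  have fY: "finite Y" unfolding Y_def using fX B by auto
  have YP: "Y \<subseteq> Pcirc d" unfolding Y_def using XP B by auto
  have disj: "(X - A) \<inter> B = {}" using B by auto
  have "cs Y l = cs X l - cs A l + cs B l" for l
  proof -
    have "cs Y l = cs (X - A) l + cs B l" unfolding Y_def cs_def
      using fX B disj by (intro sum.union_disjoint) auto
    moreover have "cs (X - A) l = cs X l - cs A l" unfolding cs_def using fX A by (intro sum_diff) auto
    ultimately show ?thesis by simp
  qed
  then have kY: "kappa d Y \<le> k" using s d0 by (simp add: kappa_le)
  have "card Y = card (X - A) + card B" unfolding Y_def using fX B disj by (intro card_Un_disjoint) auto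
  moreover have "card (X - A) = card X - card A" using A fA by (simp add: card_Diff_subset)
  moreover have "card A \<le> card X" using A fX by (simp add: card_mono)
  ultimately have "card Y \<ge> card X" using B by linarith
  moreover have "card Y \<le> card X" using dle[OF fY YP kY] cX by simp
  ultimately have "Y = X" using uq[OF fY YP _ kY] cX by simp
  then show False using B unfolding Y_def by auto
qed

lemma inv: "x \<in> X \<Longrightarrow> i < d \<Longrightarrow> j < d \<Longrightarrow> TT i j x \<in> X"
proof -
  assume a: "x \<in> X" "i < d" "j < d"
  have fT: "finite (TT i j ` X)" using fX by simp
  have TP: "TT i j ` X \<subseteq> Pcirc d" using XP a TT_Pcirc by blast
  have inj: "inj_on (TT i j) X" using XP a by (intro inj_on_inverseI[where g="TT i j"]) (auto intro: TT_TT)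
  have "card (TT i j ` X) = delta_z d k" using card_image[OF inj] cX by simp
  moreover have "kappa d (TT i j ` X) \<le> k"
    using kX d0 a XP by (simp add: kappa_le cs_TT tr_lt)
  ultimately have "TT i j ` X = X" using uq[OF fT TP] by simp
  then show ?thesis using a by blast
qed

lemma F1: "x \<in> X \<Longrightarrow> y \<in> Pcirc d \<Longrightarrow> \<forall>l<d. \<bar>y!l\<bar> \<le> \<bar>x!l\<bar> \<Longrightarrow> y \<in> X"
proof (rule ccontr)
  assume a: "x \<in> X" "y \<in> Pcirc d" "\<forall>l<d. \<bar>y!l\<bar> \<le> \<bar>x!l\<bar>" "y \<notin> X"
  have "cs X l - cs {x} l + cs {y} l \<le> k" if "l < d" for l
  proof -
    have h: "\<bar>y!l\<bar> \<le> \<bar>x!l\<bar>" using a that by auto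
    have "cs {x} l = \<bar>x!l\<bar>" "cs {y} l = \<bar>y!l\<bar>" by (simp_all add: cs_def)
    then show ?thesis using h cs_le_kappa[OF that, of X] kX by linarith
  qed
  then show False using a by (intro exch[of "{x}" "{y}"]) auto
qed

end


definition pt :: "nat \<Rightarrow> nat \<Rightarrow> int list \<Rightarrow> int list" where
  "pt i j u = (if u!i \<noteq> u!j then sw i j u else nz (u[max i j := - (u ! max i j)]))"

lemma pt_Pcirc:
  assumes "nn d u" "u \<in> Pcirc d" "i < d" "j < d"
  shows "pt i j u \<in> Pcirc d"
proof (cases "u!i \<noteq> u!j")
  case True
  then show ?thesis using assms TT_nn TT_Pcirc by (simp add: pt_def) metis
next
  case False
  let ?z = "u[max i j := - (u ! max i j)]"
  have len: "length ?z = d" "length u = d" using assms by (auto simp: nn_def)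
  have "\<bar>?z ! l\<bar> = \<bar>u ! l\<bar>" if "l < length ?z" for l using that by (cases "l = max i j") auto
  then have "primitive ?z = primitive u" using len by (intro prim_cong) auto
  then have pz: "primitive ?z" using assms by (simp add: Pcirc_def)
  obtain l where "l<d" "u!l > 0" using Pcirc_nz assms by blast
  then have "?z ! l \<noteq> 0" using len by (cases "l = max i j") auto
  then have "nz ?z \<in> Pcirc d" using len pz \<open>l<d\<close> by (intro nz_Pcirc) auto
  then show ?thesis using False by (simp add: pt_def)
qed

lemma pt_abs:
  assumes "nn d u" "i < d" "j < d" "l < d"
  shows "\<bar>pt i j u ! l\<bar> = u ! tr i j l"
proof -
  have len: "length u = d" and nn: "\<And>l. l < d \<Longrightarrow> 0 \<le> u!l" using assms(1) by (auto simp: nn_def)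
  have tl: "tr i j l < d" using assms by (simp add: tr_lt)
  show ?thesis
  proof (cases "u!i \<noteq> u!j")
    case True
    then have "pt i j u = sw i j u" by (simp add: pt_def)
    then have "pt i j u ! l = u ! tr i j l" using assms len by simp
    then show ?thesis using nn[OF tl] by simp
  next
    case False
    let ?z = "u[max i j := - (u ! max i j)]"
    have "pt i j u = nz ?z" using False by (simp add: pt_def)
    then have p1: "\<bar>pt i j u ! l\<bar> = \<bar>?z ! l\<bar>" using nz_abs[of l ?z] assms len by simp
    have mx: "max i j < length u" using assms len by simp
    have "\<bar>?z ! l\<bar> = \<bar>u ! l\<bar>" using mx by (cases "l = max i j") auto
    also have "\<dots> = u ! l" using nn[OF assms(4)] by simp
    also have "\<dots> = u ! tr i j l" using False by (simp add: tr_def)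
    finally show ?thesis using p1 by simp
  qed
qed

lemma pt_ne:
  assumes "nn d u" "i < d" "j < d" "i \<noteq> j" "\<not> (u!i = 0 \<and> u!j = 0)"
  shows "pt i j u \<noteq> u"
proof (cases "u!i \<noteq> u!j")
  case True
  then have "pt i j u ! i = u ! j" using assms by (simp add: pt_def nn_def tr_def)
  then show ?thesis using True by auto
next
  case False
  let ?z = "u[max i j := - (u ! max i j)]"
  have len: "length u = d" using assms by (auto simp: nn_def)
  have pos: "u ! i > 0" "u ! j > 0" using False assms by (auto simp: nn_def)
  have mp: "u ! max i j > 0" using pos by (simp add: max_def)
  have "?z ! max i j = - u ! max i j" using len assms by (simp add: max_def)
  then have "?z \<noteq> u" using mp by (metis neg_0_less_iff_less order_less_asym)
  moreover have "map uminus ?z \<noteq> u"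
  proof
    assume "map uminus ?z = u"
    then have "map uminus ?z ! min i j = u ! min i j" by simp
    then show False using len assms pos by (auto simp: min_def max_def nth_list_update split: if_splits)
  qed
  ultimately show ?thesis using False by (auto simp: pt_def nz_def)
qed

context U begin

lemma pt_in: "nn d u \<Longrightarrow> u \<in> X \<Longrightarrow> i < d \<Longrightarrow> j < d \<Longrightarrow> pt i j u \<in> X"
proof -
  assume a: "nn d u" "u \<in> X" "i < d" "j < d"
  then have uP: "u \<in> Pcirc d" using XP by blast
  show ?thesis
  proof (cases "u!i \<noteq> u!j")
    case True
    then show ?thesis using a uP inv TT_nn by (simp add: pt_def) metis
  next
    case False
    have "\<forall>l<d. \<bar>pt i j u ! l\<bar> \<le> \<bar>u!l\<bar>" using a False pt_abs
      by (auto simp: tr_def nn_def)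
    then show ?thesis using F1 a pt_Pcirc uP by blast
  qed
qed

lemma pt_notin: "nn d u \<Longrightarrow> u \<in> Pcirc d \<Longrightarrow> u \<notin> X \<Longrightarrow> i < d \<Longrightarrow> j < d \<Longrightarrow> pt i j u \<notin> X"
proof
  assume a: "nn d u" "u \<in> Pcirc d" "u \<notin> X" "i < d" "j < d" "pt i j u \<in> X"
  show False
  proof (cases "u!i \<noteq> u!j")
    case True
    then have "sw i j u \<in> X" using a by (simp add: pt_def)
    then have "TT i j (sw i j u) \<in> X" using inv a by blast
    moreover have "TT i j (sw i j u) = u" using a
      by (metis TT_TT TT_nn)
    ultimately show False using a by simp
  next
    case False
    have "\<forall>l<d. \<bar>u ! l\<bar> \<le> \<bar>pt i j u ! l\<bar>" using a False pt_abs
      by (auto simp: tr_def nn_def)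
    then show False using F1 a by blast
  qed
qed

lemma F2:
  assumes x: "nn d x" "x \<in> Pcirc d" "x \<in> X" and y: "nn d y" "y \<in> Pcirc d"
    and ij: "i < d" "j < d" "i \<noteq> j"
    and oth: "\<forall>l<d. l \<noteq> i \<longrightarrow> l \<noteq> j \<longrightarrow> y!l = x!l" and s: "x!i + x!j = y!i + y!j"
  shows "y \<in> X"
proof (rule ccontr)
  assume yX: "y \<notin> X"
  have lx: "length x = d" "length y = d" using x y by (auto simp: nn_def)
  have nx: "\<not> (x!i = 0 \<and> x!j = 0)"
  proof
    assume "x!i = 0 \<and> x!j = 0"
    moreover have "0 \<le> y!i" "0 \<le> y!j" using y ij by (auto simp: nn_def)
    ultimately have "y!i = 0" "y!j = 0" using s by linarith+
    then have "y = x" using lx oth \<open>x!i = 0 \<and> x!j = 0\<close> by (metis nth_equalityI)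
    then show False using yX x by simp
  qed
  have ny: "\<not> (y!i = 0 \<and> y!j = 0)"
  proof
    assume "y!i = 0 \<and> y!j = 0"
    moreover have "0 \<le> x!i" "0 \<le> x!j" using x ij by (auto simp: nn_def)
    ultimately have "x!i = 0" "x!j = 0" using s by linarith+
    then show False using nx by simp
  qed
  let ?A = "{x, pt i j x}" and ?B = "{y, pt i j y}"
  have cA: "card ?A = 2" using pt_ne[OF x(1) ij nx] by simp
  have cB: "card ?B = 2" using pt_ne[OF y(1) ij ny] by simp
  have key: "x!l + x!(tr i j l) = y!l + y!(tr i j l)" if "l<d" for l
    using oth s that by (auto simp: tr_def)
  have "cs X l - cs ?A l + cs ?B l \<le> k" if l: "l < d" for l
  proof -
    have n1: "x \<noteq> pt i j x" using pt_ne[OF x(1) ij nx] by metis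
    have n2: "y \<noteq> pt i j y" using pt_ne[OF y(1) ij ny] by metis
    have "cs ?A l = x!l + x!(tr i j l)" using n1 pt_abs[OF x(1) ij(1,2) l] x l
      by (auto simp: cs_def nn_def)
    moreover have "cs ?B l = y!l + y!(tr i j l)" using n2 pt_abs[OF y(1) ij(1,2) l] y l
      by (auto simp: cs_def nn_def)
    ultimately show ?thesis using key[OF l] cs_le_kappa[OF l, of X] kX by simp
  qed
  moreover have "?A \<subseteq> X" using pt_in x ij by auto
  moreover have "?B \<subseteq> Pcirc d" using pt_Pcirc y ij by auto
  moreover have "?B \<inter> X = {}" using pt_notin y yX ij by auto
  ultimately show False using cA cB by (intro exch[of ?A ?B]) auto
qed

end


lemma G:
  assumes x: "nn d x" "x \<in> Pcirc d" and d2: "d \<ge> 2"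
  shows "\<exists>u j. nn d u \<and> u!0 = 1 \<and> u \<in> Pcirc d \<and> j < d \<and> j \<noteq> 0 \<and>
     (\<forall>l<d. l \<noteq> 0 \<longrightarrow> l \<noteq> j \<longrightarrow> u!l = x!l) \<and> x!0 + x!j = u!0 + u!j \<and>
     (\<Sum>l<d. u!l) = (\<Sum>l<d. x!l)"
proof -
  have len: "length x = d" and nn: "\<And>l. l < d \<Longrightarrow> 0 \<le> x!l" using x by (auto simp: nn_def)
  obtain j where j: "j < d" "j \<noteq> 0" "x!0 + x!j \<ge> 1"
  proof (cases "x!0 \<ge> 1")
    case True
    then show ?thesis using that[of 1] d2 nn[of 1] by auto
  next
    case False
    then have "x!0 = 0" using nn[of 0] d2 by auto
    moreover obtain a where "a < d" "x!a > 0" using Pcirc_nz x by blast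
    ultimately show ?thesis using that[of a] by (cases "a = 0") auto
  qed
  define u where "u = x[0 := 1, j := x!0 + x!j - 1]"
  have ul: "length u = d" by (simp add: u_def len)
  have un: "u!l = x!l + (if l = 0 then 1 - x!0 else 0) + (if l = j then x!0 - 1 else 0)" if "l < d" for l
    using that j len by (auto simp: u_def nth_list_update)
  have u0: "u!0 = 1" using un[of 0] j d2 by simp
  have nnu: "nn d u" unfolding nn_def using ul un nn j by auto
  have uP: "u \<in> Pcirc d" using nn_one_Pcirc[OF nnu _ u0] d2 by simp
  have "(\<Sum>l<d. u!l) = (\<Sum>l<d. x!l + (if l = 0 then 1 - x!0 else 0) + (if l = j then x!0 - 1 else 0))"
    using un by (intro sum.cong) auto
  also have "\<dots> = (\<Sum>l<d. x!l) + (1 - x!0) + (x!0 - 1)"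
    using j d2 by (simp add: sum.distrib)
  finally have "(\<Sum>l<d. u!l) = (\<Sum>l<d. x!l)" by simp
  moreover have "\<forall>l<d. l \<noteq> 0 \<longrightarrow> l \<noteq> j \<longrightarrow> u!l = x!l" using un by auto
  moreover have "x!0 + x!j = u!0 + u!j" using un[of j] u0 j by simp
  ultimately show ?thesis using nnu u0 uP j by blast
qed

lemma abs_Pcirc: "x \<in> Pcirc d \<Longrightarrow> map abs x \<in> Pcirc d \<and> nn d (map abs x)"
proof -
  assume x: "x \<in> Pcirc d"
  have nn: "nn d (map abs x)" using x by (auto simp: nn_def Pcirc_def)
  have "primitive (map abs x)" using x prim_cong[of "map abs x" x] by (auto simp: Pcirc_def)
  moreover obtain l where "l < d" "x!l > 0" using Pcirc_nz x by blast
  ultimately show ?thesis using nn x by (intro conjI nn_Pcirc) (auto simp: Pcirc_def intro!: exI[of _ l])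
qed

context U begin

lemma Tp_aux:
  assumes v: "nn d v" "v!0 = 1"
  shows "\<forall>u. nn d u \<and> u!0 = 1 \<and> u \<in> X \<and> (\<Sum>l<d. v!l) \<le> (\<Sum>l<d. u!l) \<and>
     nat (\<Sum>l<d. max 0 (v!l - u!l)) = n \<longrightarrow> v \<in> X"
proof (induction n)
  case 0
  show ?case
  proof (intro allI impI)
    fix u assume u: "nn d u \<and> u!0 = 1 \<and> u \<in> X \<and> (\<Sum>l<d. v!l) \<le> (\<Sum>l<d. u!l) \<and>
     nat (\<Sum>l<d. max 0 (v!l - u!l)) = 0"
    have S: "(\<Sum>l<d. max 0 (v!l - u!l)) \<le> 0" using u by linarith
    have "\<bar>v!l\<bar> \<le> \<bar>u!l\<bar>" if l: "l < d" for l
    proof -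
      have "max 0 (v!l - u!l) \<le> (\<Sum>l<d. max 0 (v!l - u!l))"
        by (rule member_le_sum) (use l in auto)
      then have "v!l \<le> u!l" using S by linarith
      moreover have "0 \<le> v!l" using v l by (simp add: nn_def)
      ultimately show ?thesis by linarith
    qed
    then have "\<forall>l<d. \<bar>v!l\<bar> \<le> \<bar>u!l\<bar>" by blast
    moreover have "v \<in> Pcirc d" using nn_one_Pcirc v d0 by blast
    ultimately show "v \<in> X" using F1 u by blast
  qed
next
  case (Suc n)
  show ?case
  proof (intro allI impI)
    fix u assume u: "nn d u \<and> u!0 = 1 \<and> u \<in> X \<and> (\<Sum>l<d. v!l) \<le> (\<Sum>l<d. u!l) \<and>
     nat (\<Sum>l<d. max 0 (v!l - u!l)) = Suc n"
    have ul: "length u = d" and unn: "\<And>l. l<d \<Longrightarrow> 0 \<le> u!l" using u by (auto simp: nn_def)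
    have vnn: "\<And>l. l<d \<Longrightarrow> 0 \<le> v!l" using v by (auto simp: nn_def)
    obtain l0 where l0: "l0 < d" "v!l0 > u!l0"
    proof (rule ccontr)
      assume "\<not> thesis"
      then have h: "\<not> u!l < v!l" if "l < d" for l using that \<open>\<And>l0. l0 < d \<Longrightarrow> v!l0 > u!l0 \<Longrightarrow> thesis\<close> by blast
      have "\<forall>l\<in>{..<d}. max 0 (v!l - u!l) = 0"
      proof
        fix l assume "l \<in> {..<d}"
        then have "v!l - u!l \<le> 0" using h by force
        then show "max 0 (v!l - u!l) = 0" by simp
      qed
      then have "(\<Sum>l<d. max 0 (v!l - u!l)) = 0" by simp
      then show False using u by simp
    qed
    obtain r where r: "r < d" "u!r > v!r"
    proof (rule ccontr)
      assume "\<not> thesis"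
      then have h: "\<not> v!l < u!l" if "l < d" for l using that \<open>\<And>r. r < d \<Longrightarrow> u!r > v!r \<Longrightarrow> thesis\<close> by blast
      have "\<forall>l\<in>{..<d}. u!l \<le> v!l" using h by force
      then have "(\<Sum>l<d. u!l) < (\<Sum>l<d. v!l)" using l0
        by (intro sum_strict_mono_ex1) auto
      then show False using u by simp
    qed
    have u0: "u!0 = 1" using u by simp
    have ne1: "l0 \<noteq> 0"
    proof
      assume "l0 = 0" then show False using l0(2) u0 v(2) by simp
    qed
    have ne2: "r \<noteq> 0"
    proof
      assume "r = 0" then show False using r(2) u0 v(2) by simp
    qed
    have ne3: "l0 \<noteq> r" using l0(2) r(2) by auto
    note ne = ne1 ne2 ne3
    define w where "w = u[l0 := u!l0 + 1, r := u!r - 1]"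
    have wl: "length w = d" by (simp add: w_def ul)
    have wn: "w!l = u!l + (if l = l0 then 1 else 0) - (if l = r then 1 else 0)" if "l < d" for l
      using that ne ul l0 r by (auto simp: w_def nth_list_update)
    have w0: "w!0 = 1" using wn[of 0] ne u d0 by simp
    have "0 \<le> w!l" if "l < d" for l
    proof -
      have "0 \<le> v!r" using vnn r by simp
      then show ?thesis using wn[OF that] unn[OF that] r ne by (cases "l = r") auto
    qed
    then have nnw: "nn d w" unfolding nn_def using wl by auto
    have wP: "w \<in> Pcirc d" using nn_one_Pcirc[OF nnw d0 w0] .
    have uP: "u \<in> Pcirc d" using u XP by blast
    have o1: "\<forall>l<d. l \<noteq> l0 \<longrightarrow> l \<noteq> r \<longrightarrow> w!l = u!l" using wn by simp
    have o2: "u!l0 + u!r = w!l0 + w!r" using wn[OF l0(1)] wn[OF r(1)] ne by simp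
    have uX: "u \<in> X" "nn d u" using u by auto
    have wX: "w \<in> X"
      using F2[OF uX(2) uP uX(1) nnw wP l0(1) r(1) ne(3) o1 o2] .
    have "(\<Sum>l<d. w!l) = (\<Sum>l<d. u!l + (if l = l0 then 1 else 0) - (if l = r then 1 else 0))"
      using wn by (intro sum.cong) auto
    also have "\<dots> = (\<Sum>l<d. u!l)" using l0 r by (simp add: sum.distrib sum_subtractf)
    finally have sw: "(\<Sum>l<d. w!l) = (\<Sum>l<d. u!l)" .
    have "(\<Sum>l<d. max 0 (v!l - w!l)) = (\<Sum>l<d. max 0 (v!l - u!l) - (if l = l0 then 1 else 0))"
    proof (rule sum.cong)
      fix l assume "l \<in> {..<d}"
      then have l: "l < d" by simp
      show "max 0 (v!l - w!l) = max 0 (v!l - u!l) - (if l = l0 then 1 else 0)"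
      proof (cases "l = l0")
        case True
        then show ?thesis using wn[OF l] ne l0(2) by simp
      next
        case False
        note F = False
        show ?thesis
        proof (cases "l = r")
          case True
          then show ?thesis using wn[OF l] F r(2) by simp
        next
          case False
          then show ?thesis using wn[OF l] F by simp
        qed
      qed
    qed simp
    also have "\<dots> = (\<Sum>l<d. max 0 (v!l - u!l)) - 1" using l0 by (simp add: sum_subtractf)
    finally have eqD: "(\<Sum>l<d. max 0 (v!l - w!l)) = (\<Sum>l<d. max 0 (v!l - u!l)) - 1" .
    have "nat (\<Sum>l<d. max 0 (v!l - u!l)) = Suc n" using u by blast
    then have "(\<Sum>l<d. max 0 (v!l - u!l)) = int n + 1" by (simp add: nat_eq_iff split: if_splits)
    then have "nat (\<Sum>l<d. max 0 (v!l - w!l)) = n" using eqD by simp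
    moreover have "(\<Sum>l<d. v!l) \<le> (\<Sum>l<d. w!l)" using sw u by simp
    ultimately show "v \<in> X" using Suc.IH nnw w0 wX by blast
  qed
qed

lemma Tp: "nn d v \<Longrightarrow> v!0 = 1 \<Longrightarrow> nn d u \<Longrightarrow> u!0 = 1 \<Longrightarrow> u \<in> X \<Longrightarrow>
   (\<Sum>l<d. v!l) \<le> (\<Sum>l<d. u!l) \<Longrightarrow> v \<in> X"
  using Tp_aux by blast

lemma L7:
  assumes x: "x \<in> X" and y: "y \<in> Pcirc d" and le: "nrm d y \<le> nrm d x"
  shows "y \<in> X"
proof -
  have xP: "x \<in> Pcirc d" using x XP by blast
  let ?xa = "map abs x" and ?ya = "map abs y"
  have xa: "?xa \<in> Pcirc d" "nn d ?xa" using abs_Pcirc[OF xP] by auto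
  have ya: "?ya \<in> Pcirc d" "nn d ?ya" using abs_Pcirc[OF y] by auto
  have lx: "length x = d" "length y = d" using xP y by (auto simp: Pcirc_def)
  have xaX: "?xa \<in> X" using F1[OF x xa(1)] lx by simp
  obtain ux jx where ux: "nn d ux" "ux!0 = 1" "ux \<in> Pcirc d" "jx < d" "jx \<noteq> 0"
     "\<forall>l<d. l \<noteq> 0 \<longrightarrow> l \<noteq> jx \<longrightarrow> ux!l = ?xa!l" "?xa!0 + ?xa!jx = ux!0 + ux!jx"
     "(\<Sum>l<d. ux!l) = (\<Sum>l<d. ?xa!l)"
    using G[OF xa(2) xa(1) d2] by blast
  obtain uy jy where uy: "nn d uy" "uy!0 = 1" "uy \<in> Pcirc d" "jy < d" "jy \<noteq> 0"
     "\<forall>l<d. l \<noteq> 0 \<longrightarrow> l \<noteq> jy \<longrightarrow> uy!l = ?ya!l" "?ya!0 + ?ya!jy = uy!0 + uy!jy"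
     "(\<Sum>l<d. uy!l) = (\<Sum>l<d. ?ya!l)"
    using G[OF ya(2) ya(1) d2] by blast
  have uxX: "ux \<in> X" using F2[OF xa(2) xa(1) xaX ux(1) ux(3) d0 ux(4) ux(5)[symmetric] ux(6) ux(7)] .
  have "(\<Sum>l<d. ?ya!l) = nrm d y" unfolding nrm_def using lx by (intro sum.cong) auto
  moreover have "(\<Sum>l<d. ?xa!l) = nrm d x" unfolding nrm_def using lx by (intro sum.cong) auto
  ultimately have "(\<Sum>l<d. uy!l) \<le> (\<Sum>l<d. ux!l)" using ux(8) uy(8) le by simp
  then have uyX: "uy \<in> X" using Tp[OF uy(1) uy(2) ux(1) ux(2) uxX] by simp
  have "?ya \<in> X" using F2[OF uy(1) uy(3) uyX ya(2) ya(1) d0 uy(4) uy(5)[symmetric]] uy(6) uy(7) by auto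
  then show ?thesis using F1[OF _ y] lx by simp
qed

end


definition ev :: "nat \<Rightarrow> int \<Rightarrow> int list" where
  "ev d m = map (\<lambda>l. if l = 0 then 1 else if l = 1 then m - 1 else 0) [0..<d]"

lemma ev_nth: "l < d \<Longrightarrow> ev d m ! l = (if l = 0 then 1 else if l = 1 then m - 1 else 0)"
  by (simp add: ev_def)

lemma ev_Pcirc: "d \<ge> 2 \<Longrightarrow> m \<ge> 1 \<Longrightarrow> ev d m \<in> Pcirc d"
  by (rule nn_one_Pcirc) (auto simp: nn_def ev_def)

lemma ev_nrm: "d \<ge> 2 \<Longrightarrow> m \<ge> 1 \<Longrightarrow> nrm d (ev d m) = m"
proof -
  assume a: "d \<ge> 2" "m \<ge> 1"
  have "nrm d (ev d m) = (\<Sum>l<d. (if l = 0 then 1 else 0) + (if l = 1 then m - 1 else 0))"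
    unfolding nrm_def using a by (intro sum.cong) (auto simp: ev_nth)
  also have "\<dots> = m" using a by (simp add: sum.distrib)
  finally show ?thesis .
qed

context U begin

lemma X_ne: "X \<noteq> {}"
proof
  assume "X = {}"
  then have dz: "delta_z d k = 0" using cX by simp
  let ?e = "ev d 1"
  have eP: "?e \<in> Pcirc d" using ev_Pcirc d2 by simp
  have "cs {?e} l \<le> k" if "l < d" for l using that kpos by (simp add: cs_def ev_nth)
  then have "kappa d {?e} \<le> k" using d0 by (simp add: kappa_le)
  then have "card {?e} \<le> delta_z d k" using eP by (intro dle) auto
  then show False using dz by simp
qed

definition m where "m = Max (nrm d ` X)"

lemma m_in: "\<exists>x\<in>X. nrm d x = m"
  unfolding m_def using X_ne fX by (metis (mono_tags, lifting) Max_in finite_imageI image_iff image_is_empty)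

lemma X_eq: "X = Bint d m \<inter> Pcirc d"
proof
  show "X \<subseteq> Bint d m \<inter> Pcirc d"
  proof
    fix x assume x: "x \<in> X"
    then have "nrm d x \<le> m" unfolding m_def using fX by simp
    then show "x \<in> Bint d m \<inter> Pcirc d" using x XP by (auto simp: Bint_def Pcirc_def nrm_def)
  qed
  show "Bint d m \<inter> Pcirc d \<subseteq> X"
  proof
    fix y assume y: "y \<in> Bint d m \<inter> Pcirc d"
    obtain x where "x \<in> X" "nrm d x = m" using m_in by blast
    moreover have "nrm d y \<le> m" using y by (simp add: Bint_def nrm_def)
    ultimately show "y \<in> X" using L7 y by simp
  qed
qed

lemma m_pos: "m \<ge> 1"
proof -
  obtain x where "x \<in> X" "nrm d x = m" using m_in by blast
  moreover then have "x \<in> Pcirc d" using XP by blast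
  ultimately show ?thesis using nrm_ge1 by metis
qed

lemma kappa_eq: "kappa d X = k"
proof (rule ccontr)
  assume "kappa d X \<noteq> k"
  then have lt: "kappa d X \<le> k - 1" using kX by simp
  let ?x = "ev d m" and ?y = "ev d (m + 1)"
  have xP: "?x \<in> Pcirc d" using ev_Pcirc d2 m_pos by simp
  have yP: "?y \<in> Pcirc d" using ev_Pcirc d2 m_pos by simp
  have "nrm d ?x = m" using ev_nrm d2 m_pos by simp
  then have "?x \<in> Bint d m \<inter> Pcirc d" using xP by (simp add: Bint_def nrm_def Pcirc_def)
  then have xX: "?x \<in> X" using X_eq by blast
  have "nrm d ?y = m + 1" using ev_nrm d2 m_pos by simp
  then have "?y \<notin> Bint d m \<inter> Pcirc d" by (simp add: Bint_def nrm_def)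
  then have yX: "?y \<notin> X" using X_eq by blast
  have "cs X l - cs {?x} l + cs {?y} l \<le> k" if l: "l < d" for l
  proof -
    have "cs {?y} l \<le> cs {?x} l + 1" using l m_pos by (simp add: cs_def ev_nth)
    moreover have "cs X l \<le> k - 1" using cs_le_kappa[OF l, of X] lt by simp
    ultimately show ?thesis by simp
  qed
  then show False using xX yX yP by (intro exch[of "{?x}" "{?y}"]) auto
qed

lemma main_fwd: "\<exists>p::int. p > 0 \<and> k = kappa d (Bint d p \<inter> Pcirc d)"
  using kappa_eq X_eq m_pos by (intro exI[of _ m]) auto

end

lemma kappa_cs: "kappa d X = Max (cs X ` {..<d})"
  by (simp add: kappa_def cs_def)

lemma W_fin: "finite (Bint d p \<inter> Pcirc d)"
proof -
  have "Bint d p \<inter> Pcirc d \<subseteq> {xs. set xs \<subseteq> {-p..p} \<and> length xs = d}"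
  proof
    fix x assume x: "x \<in> Bint d p \<inter> Pcirc d"
    have "set x \<subseteq> {-p..p}"
    proof
      fix e assume "e \<in> set x"
      then obtain i where i: "i < length x" "x!i = e" by (auto simp: in_set_conv_nth)
      have "\<bar>x!i\<bar> \<le> (\<Sum>i<d. \<bar>x!i\<bar>)" using i x by (intro member_le_sum) (auto simp: Bint_def)
      then show "e \<in> {-p..p}" using x i by (auto simp: Bint_def)
    qed
    then show "x \<in> {xs. set xs \<subseteq> {-p..p} \<and> length xs = d}" using x by (simp add: Bint_def)
  qed
  moreover have "finite {xs. set xs \<subseteq> {-p..p} \<and> length xs = d}"
    by (rule finite_lists_length_eq) simp
  ultimately show ?thesis using finite_subset by blast
qed

lemma W_TT: "x \<in> Bint d p \<inter> Pcirc d \<Longrightarrow> i < d \<Longrightarrow> j < d \<Longrightarrow> TT i j x \<in> Bint d p \<inter> Pcirc d"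
proof -
  assume a: "x \<in> Bint d p \<inter> Pcirc d" "i < d" "j < d"
  then have "TT i j x \<in> Pcirc d" "nrm d (TT i j x) = nrm d x" using TT_Pcirc nrm_TT by auto
  then show ?thesis using a by (auto simp: Bint_def Pcirc_def nrm_def)
qed

lemma W_cs: assumes "l < d" shows "cs (Bint d p \<inter> Pcirc d) l = cs (Bint d p \<inter> Pcirc d) 0"
proof -
  let ?W = "Bint d p \<inter> Pcirc d"
  have d0: "0 < d" using assms by simp
  have "TT 0 l ` ?W = ?W"
  proof
    show "TT 0 l ` ?W \<subseteq> ?W" using W_TT d0 assms by blast
    show "?W \<subseteq> TT 0 l ` ?W"
    proof
      fix w assume w: "w \<in> ?W"
      then have "w = TT 0 l (TT 0 l w)" using TT_TT d0 assms by auto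
      moreover have "TT 0 l w \<in> ?W" using W_TT w d0 assms by blast
      ultimately show "w \<in> TT 0 l ` ?W" by blast
    qed
  qed
  then have "cs ?W l = cs (TT 0 l ` ?W) l" by simp
  also have "\<dots> = cs ?W (tr 0 l l)" using cs_TT[of ?W d 0 l l] d0 assms by auto
  also have "\<dots> = cs ?W 0" by (simp add: tr_def)
  finally show ?thesis .
qed

lemma main_bwd:
  assumes d2: "d \<ge> 2" and kpos: "k > 0" and p: "p > 0" and kW: "k = kappa d (Bint d p \<inter> Pcirc d)"
  shows "\<exists>!X. finite X \<and> X \<subseteq> Pcirc d \<and> card X = delta_z d k \<and> kappa d X \<le> k"
proof -
  let ?W = "Bint d p \<inter> Pcirc d"
  have d0: "d > 0" using d2 by simp
  have fW: "finite ?W" by (rule W_fin)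
  have "cs ?W ` {..<d} = {cs ?W 0}"
  proof
    show "cs ?W ` {..<d} \<subseteq> {cs ?W 0}"
    proof
      fix z assume "z \<in> cs ?W ` {..<d}"
      then obtain l where "l < d" "z = cs ?W l" by auto
      then show "z \<in> {cs ?W 0}" using W_cs[of l d p] by simp
    qed
    show "{cs ?W 0} \<subseteq> cs ?W ` {..<d}" using d0 by auto
  qed
  then have kc: "k = cs ?W 0" using kW by (simp add: kappa_cs)
  have csW: "cs ?W l = k" if "l < d" for l using W_cs[OF that] kc by (simp only:)
  have sW: "(\<Sum>w\<in>?W. nrm d w) = int d * k"
  proof -
    have "(\<Sum>w\<in>?W. nrm d w) = (\<Sum>l<d. cs ?W l)" unfolding nrm_def cs_def by (rule sum.swap)
    also have "\<dots> = (\<Sum>l<d. k)" using csW by simp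
    finally show ?thesis by simp
  qed
  have key: "Y = ?W" if Y: "finite Y" "Y \<subseteq> Pcirc d" "kappa d Y \<le> k" "card Y \<ge> card ?W" for Y
  proof -
    have "(\<Sum>y\<in>Y. nrm d y) = (\<Sum>l<d. cs Y l)" unfolding nrm_def cs_def by (rule sum.swap)
    also have "\<dots> \<le> (\<Sum>l<d. k)" using Y kappa_le d0 by (intro sum_mono) auto
    finally have sY: "(\<Sum>y\<in>Y. nrm d y) \<le> int d * k" by simp
    let ?I = "Y \<inter> ?W"
    have fI: "finite ?I" using Y by simp
    have e1: "(\<Sum>y\<in>Y. nrm d y) = (\<Sum>y\<in>?I. nrm d y) + (\<Sum>y\<in>Y - ?W. nrm d y)"
      by (rule sum.Int_Diff[OF Y(1)])
    have e2: "(\<Sum>y\<in>?W. nrm d y) = (\<Sum>y\<in>?I. nrm d y) + (\<Sum>y\<in>?W - Y. nrm d y)"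
      using sum.Int_Diff[OF fW, of "nrm d" Y] by (simp add: Int_commute)
    have "(\<Sum>y\<in>Y - ?W. nrm d y) \<ge> (\<Sum>y\<in>Y - ?W. p + 1)"
    proof (rule sum_mono)
      fix y assume "y \<in> Y - ?W"
      then have "y \<in> Pcirc d" "y \<notin> Bint d p" using Y by auto
      then show "p + 1 \<le> nrm d y" by (auto simp: Bint_def Pcirc_def nrm_def)
    qed
    then have a1: "(\<Sum>y\<in>Y - ?W. nrm d y) \<ge> (p + 1) * int (card (Y - ?W))" by (simp add: mult.commute)
    have "(\<Sum>y\<in>?W - Y. nrm d y) \<le> (\<Sum>y\<in>?W - Y. p)"
      by (rule sum_mono) (auto simp: Bint_def nrm_def)
    then have a2: "(\<Sum>y\<in>?W - Y. nrm d y) \<le> p * int (card (?W - Y))" by (simp add: mult.commute)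
    have "card Y = card ?I + card (Y - ?W)" using Y by (metis card_Int_Diff inf_commute)
    moreover have "card ?W = card ?I + card (?W - Y)" using fW by (metis card_Int_Diff inf_commute Int_commute)
    ultimately have c: "card (?W - Y) \<le> card (Y - ?W)" using Y by linarith
    have "(p + 1) * int (card (Y - ?W)) \<le> p * int (card (?W - Y))"
      using a1 a2 e1 e2 sY sW by linarith
    also have "\<dots> \<le> p * int (card (Y - ?W))" using c p by simp
    finally have "card (Y - ?W) = 0" using p by (simp add: algebra_simps)
    then have "card (?W - Y) = 0" using c by simp
    then have "?W - Y = {}" "Y - ?W = {}" using fW Y \<open>card (Y - ?W) = 0\<close> by auto
    then show ?thesis by blast
  qed
  have WP: "?W \<subseteq> Pcirc d" by blast
  have kWle: "kappa d ?W \<le> k" using kW by simp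
  have k0: "0 \<le> k" using kpos by simp
  have "card ?W \<le> delta_z d k" by (rule delta_props(1)[OF d0 k0 fW WP kWle])
  moreover obtain Y where Y: "finite Y" "Y \<subseteq> Pcirc d" "kappa d Y \<le> k" "card Y = delta_z d k"
    using delta_props(2)[OF d0 k0] by blast
  ultimately have "Y = ?W" using Y by (intro key) auto
  then have dW: "delta_z d k = card ?W" using Y by simp
  show ?thesis
  proof (rule ex1I[of _ ?W])
    show "finite ?W \<and> ?W \<subseteq> Pcirc d \<and> card ?W = delta_z d k \<and> kappa d ?W \<le> k" using fW WP dW kWle by simp
    fix Z assume "finite Z \<and> Z \<subseteq> Pcirc d \<and> card Z = delta_z d k \<and> kappa d Z \<le> k"
    then show "Z = ?W" using dW by (intro key) auto
  qed
qed

theorem theorem1p4: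
  fixes d :: nat and k :: int
  assumes "d \<ge> 2" and "k > 0"
  shows "(\<exists>!X. finite X \<and> X \<subseteq> Pcirc d \<and> card X = delta_z d k \<and> kappa d X \<le> k)
         \<longleftrightarrow> (\<exists>p::int. p > 0 \<and> k = kappa d (Bint d p \<inter> Pcirc d))"
proof
  assume "\<exists>!X. finite X \<and> X \<subseteq> Pcirc d \<and> card X = delta_z d k \<and> kappa d X \<le> k"
  then obtain X where PX: "finite X \<and> X \<subseteq> Pcirc d \<and> card X = delta_z d k \<and> kappa d X \<le> k"
    and u: "\<forall>Y. finite Y \<and> Y \<subseteq> Pcirc d \<and> card Y = delta_z d k \<and> kappa d Y \<le> k \<longrightarrow> Y = X"
    by (rule ex1E) blast
  have "U d k X" unfolding U_def using assms PX u by blast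
  then interpret U d k X .
  show "\<exists>p::int. p > 0 \<and> k = kappa d (Bint d p \<inter> Pcirc d)" by (rule main_fwd)
next
  assume "\<exists>p::int. p > 0 \<and> k = kappa d (Bint d p \<inter> Pcirc d)"
  then obtain p where p: "p > 0" "k = kappa d (Bint d p \<inter> Pcirc d)" by blast
  show "\<exists>!X. finite X \<and> X \<subseteq> Pcirc d \<and> card X = delta_z d k \<and> kappa d X \<le> k"
    by (rule main_bwd[OF assms p])
qed

end
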